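(* Let $\mathscr D=(V,\mathscr B)$ be a symmetric $(v,k,\lambda)$ design with $k<v$. If $X$ is any $k$-subset of $V$, then there exists a block $B\in\mathscr B$ with $|B\cap X|\geq \lambda+1$.
   Context: A symmetric $(v,k,\lambda)$ design is a $2$-$(v,k,\lambda)$ design $(V,\mathscr B)$ (a set $V$ of $v$ points and a collection $\mathscr B$ of $k$-subsets of $V$, called blocks, such that every pair of distinct points lies in exactly $\lambda$ blocks) having exactly as many blocks as points; consequently every point lies in exactly $k$ blocks and $\lambda(v-1)=k(k-1)$. *)

theory Defs
  imports Main "HOL-Library.Multiset"
begin

definition two_design :: "'a set \<Rightarrow> 'a set multiset \<Rightarrow> nat \<Rightarrow> nat \<Rightarrow> nat \<Rightarrow> bool" where
  "two_design V \<B> v k lam \<longleftrightarrow>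
     finite V \<and> card V = v \<and> 2 \<le> v \<and> 1 \<le> lam \<and>
     (\<forall>B \<in># \<B>. B \<subseteq> V \<and> card B = k) \<and>
     (\<forall>x\<in>V. \<forall>y\<in>V. x \<noteq> y \<longrightarrow> size (filter_mset (\<lambda>B. x \<in> B \<and> y \<in> B) \<B>) = lam)"

definition symmetric_design :: "'a set \<Rightarrow> 'a set multiset \<Rightarrow> nat \<Rightarrow> nat \<Rightarrow> nat \<Rightarrow> bool" where
  "symmetric_design V \<B> v k lam \<longleftrightarrow> two_design V \<B> v k lam \<and> size \<B> = v"

end

theory Submission
  imports Defs
begin

lemma dc_general:
  assumes "finite T"
  shows "(\<Sum>B\<in>#M. card (g B \<inter> T)) = (\<Sum>t\<in>T. size (filter_mset (\<lambda>B. t \<in> g B) M))"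
proof (induction M)
  case empty then show ?case by simp
next
  case (add B M)
  have "card (g B \<inter> T) = (\<Sum>t\<in>T. if t \<in> g B then 1 else 0)"
  proof -
    have "card (g B \<inter> T) = card (T \<inter> g B)" by (metis Int_commute)
    also have "\<dots> = (\<Sum>t\<in>T. if t \<in> g B then 1 else 0)"
      using assms by (simp add: sum.If_cases)
    finally show ?thesis .
  qed
  moreover have "(\<Sum>t\<in>T. size (filter_mset (\<lambda>B'. t \<in> g B') (add_mset B M)))
      = (\<Sum>t\<in>T. (if t \<in> g B then 1 else 0) + size (filter_mset (\<lambda>B'. t \<in> g B') M))"
    by (rule sum.cong) auto
  ultimately show ?case using add by (simp add: sum.distrib)
qed

lemma sum_const_mset: "(\<Sum>B\<in>#M. (c::nat)) = size M * c"
  by (induction M) auto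

lemma card_offdiag:
  assumes "finite A"
  shows "card {p\<in>A\<times>A. fst p \<noteq> snd p} = card A * (card A - 1)"
proof -
  have e: "{p\<in>A\<times>A. fst p \<noteq> snd p} = A \<times> A - Id_on A" by (auto simp: Id_on_def)
  have "card (A \<times> A - Id_on A) = card (A\<times>A) - card (Id_on A)"
    by (rule card_Diff_subset) (use assms in \<open>auto simp: Id_on_def\<close>)
  moreover have "Id_on A = (\<lambda>x. (x,x)) ` A" by (auto simp: Id_on_def)
  moreover have "card ((\<lambda>x. (x,x)) ` A) = card A" by (rule card_image) (auto simp: inj_on_def)
  ultimately show ?thesis using e by (simp add: card_cartesian_product diff_mult_distrib2)
qed

theorem lemma2p1:
  fixes V :: "'a set" and \<B> :: "'a set multiset" and v k lam :: nat and X :: "'a set"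
  assumes "symmetric_design V \<B> v k lam"
    and "k < v"
    and "X \<subseteq> V" and "card X = k"
  shows "\<exists>B \<in># \<B>. card (B \<inter> X) \<ge> lam + 1"
proof -
  from assms(1) have fin: "finite V" and cV: "card V = v" and v2: "2 \<le> v" and l1: "1 \<le> lam"
    and blk: "\<And>B. B \<in># \<B> \<Longrightarrow> B \<subseteq> V \<and> card B = k"
    and pr: "\<And>x y. x \<in> V \<Longrightarrow> y \<in> V \<Longrightarrow> x \<noteq> y \<Longrightarrow> size (filter_mset (\<lambda>B. x \<in> B \<and> y \<in> B) \<B>) = lam"
    and sz: "size \<B> = v"
    unfolding symmetric_design_def two_design_def by auto
  define r where "r x = size (filter_mset (\<lambda>B. x \<in> B) \<B>)" for x
  have rx: "r x * (k - 1) = lam * (v - 1)" if xV: "x \<in> V" for x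
  proof -
    let ?M = "filter_mset (\<lambda>B. x \<in> B) \<B>"
    have "(\<Sum>B\<in>#?M. card (id B \<inter> (V - {x}))) = (\<Sum>y\<in>V-{x}. size (filter_mset (\<lambda>B. y \<in> id B) ?M))"
      by (rule dc_general) (use fin in auto)
    also have "\<dots> = (\<Sum>y\<in>V-{x}. lam)"
    proof (rule sum.cong)
      fix y assume "y \<in> V - {x}"
      then have "y \<in> V" "x \<noteq> y" by auto
      moreover have "filter_mset (\<lambda>B. y \<in> id B) ?M = filter_mset (\<lambda>B. x \<in> B \<and> y \<in> B) \<B>"
        by (simp add: filter_filter_mset)
      ultimately show "size (filter_mset (\<lambda>B. y \<in> id B) ?M) = lam"
        using pr[of x y] xV by simp
    qed simp
    also have "\<dots> = lam * (v - 1)" using fin cV xV by simp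
    finally have 1: "(\<Sum>B\<in>#?M. card (id B \<inter> (V - {x}))) = lam * (v - 1)" .
    have "(\<Sum>B\<in>#?M. card (id B \<inter> (V - {x}))) = (\<Sum>B\<in>#?M. k - 1)"
    proof (rule arg_cong[where f=sum_mset], rule image_mset_cong)
      fix B assume "B \<in># ?M"
      then have "B \<in># \<B>" "x \<in> B" by auto
      then have "B \<subseteq> V" "card B = k" using blk by auto
      then have "id B \<inter> (V - {x}) = B - {x}" by auto
      then show "card (id B \<inter> (V - {x})) = k - 1"
        using \<open>card B = k\<close> \<open>x \<in> B\<close> by simp
    qed
    also have "\<dots> = r x * (k - 1)" unfolding r_def by (rule sum_const_mset)
    finally show ?thesis using 1 by simp
  qed
  have k2: "k \<ge> 2"
  proof (rule ccontr)
    assume "\<not> k \<ge> 2"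
    then have "k - 1 = 0" by simp
    have "V \<noteq> {}" using v2 cV by auto
    then obtain x where "x \<in> V" by blast
    from rx[OF this] \<open>k - 1 = 0\<close> have "lam * (v - 1) = 0" by simp
    with l1 v2 show False by simp
  qed
  have rconst: "r x = r y" if "x \<in> V" "y \<in> V" for x y
  proof -
    have "r x * (k - 1) = r y * (k - 1)" using rx[OF that(1)] rx[OF that(2)] by simp
    moreover have "k - 1 \<noteq> 0" using k2 by simp
    ultimately show ?thesis by simp
  qed
  have "V \<noteq> {}" using v2 cV by auto
  then obtain x0 where x0: "x0 \<in> V" by blast
  have "(\<Sum>B\<in>#\<B>. card (id B \<inter> V)) = (\<Sum>x\<in>V. size (filter_mset (\<lambda>B. x \<in> id B) \<B>))"
    by (rule dc_general) (rule fin)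
  also have "\<dots> = (\<Sum>x\<in>V. r x0)"
  proof (rule sum.cong)
    fix x assume "x \<in> V"
    then have "r x = r x0" using rconst x0 by blast
    then show "size (filter_mset (\<lambda>B. x \<in> id B) \<B>) = r x0" unfolding r_def by simp
  qed simp
  also have "\<dots> = v * r x0" using cV by simp
  finally have a: "(\<Sum>B\<in>#\<B>. card (id B \<inter> V)) = v * r x0" .
  have "(\<Sum>B\<in>#\<B>. card (id B \<inter> V)) = (\<Sum>B\<in>#\<B>. k)"
    by (rule arg_cong[where f=sum_mset], rule image_mset_cong) (use blk in \<open>auto simp: Int_absorb2\<close>)
  also have "\<dots> = v * k" using sum_const_mset[of k \<B>] sz by simp
  finally have b: "(\<Sum>B\<in>#\<B>. card (id B \<inter> V)) = v * k" .
  have "v * r x0 = v * k" using a b by metis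
  then have r0: "r x0 = k" using v2 by (metis mult_left_cancel not_numeral_le_zero le_0_eq)
  have rk: "r x = k" if "x \<in> V" for x using rconst[OF that x0] r0 by simp
  have lamv: "lam * (v - 1) = k * (k - 1)" using rx[OF x0] r0 by simp
  have finX: "finite X" using fin assms(3) finite_subset by blast
  have "(\<Sum>B\<in>#\<B>. card (id B \<inter> X)) = (\<Sum>x\<in>X. size (filter_mset (\<lambda>B. x \<in> id B) \<B>))"
    by (rule dc_general) (rule finX)
  also have "\<dots> = (\<Sum>x\<in>X. k)"
  proof (rule sum.cong)
    fix x assume "x \<in> X"
    then have "r x = k" using rk assms(3) by blast
    then show "size (filter_mset (\<lambda>B. x \<in> id B) \<B>) = k" unfolding r_def by simp
  qed simp
  also have "\<dots> = k * k" using assms(4) by simp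
  finally have s1: "(\<Sum>B\<in>#\<B>. card (B \<inter> X)) = k * k" by simp
  define P where "P = {p\<in>X\<times>X. fst p \<noteq> snd p}"
  have finP: "finite P" using finX unfolding P_def by auto
  have "(\<Sum>B\<in>#\<B>. card ((\<lambda>B. B \<times> B) B \<inter> P)) = (\<Sum>p\<in>P. size (filter_mset (\<lambda>B. p \<in> (\<lambda>B. B \<times> B) B) \<B>))"
    by (rule dc_general) (rule finP)
  also have "\<dots> = (\<Sum>p\<in>P. lam)"
  proof (rule sum.cong)
    fix p assume "p \<in> P"
    then obtain x y where p: "p = (x,y)" "x \<in> X" "y \<in> X" "x \<noteq> y" unfolding P_def by auto
    then show "size (filter_mset (\<lambda>B. p \<in> (\<lambda>B. B \<times> B) B) \<B>) = lam"
      using pr[of x y] assms(3) by auto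
  qed simp
  also have "\<dots> = k * (k - 1) * lam" using card_offdiag[OF finX] assms(4) unfolding P_def by simp
  finally have s2a: "(\<Sum>B\<in>#\<B>. card ((\<lambda>B. B \<times> B) B \<inter> P)) = k * (k - 1) * lam" .
  have "(\<Sum>B\<in>#\<B>. card ((\<lambda>B. B \<times> B) B \<inter> P)) = (\<Sum>B\<in>#\<B>. card (B \<inter> X) * (card (B \<inter> X) - 1))"
  proof (rule arg_cong[where f=sum_mset], rule image_mset_cong)
    fix B :: "'a set"
    have "(\<lambda>B. B \<times> B) B \<inter> P = {p\<in>(B \<inter> X)\<times>(B \<inter> X). fst p \<noteq> snd p}" unfolding P_def by auto
    then show "card ((\<lambda>B. B \<times> B) B \<inter> P) = card (B \<inter> X) * (card (B \<inter> X) - 1)"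
      using card_offdiag[of "B \<inter> X"] finX by simp
  qed
  with s2a have s2: "(\<Sum>B\<in>#\<B>. card (B \<inter> X) * (card (B \<inter> X) - 1)) = k * (k - 1) * lam" by simp
  show ?thesis
  proof (rule ccontr)
    assume "\<not> ?thesis"
    then have le: "\<And>B. B \<in># \<B> \<Longrightarrow> card (B \<inter> X) \<le> lam" by force
    have "(\<Sum>B\<in>#\<B>. card (B \<inter> X) * (card (B \<inter> X) - 1)) \<le> (\<Sum>B\<in>#\<B>. card (B \<inter> X) * (lam - 1))"
      by (rule sum_mset_mono) (use le in \<open>auto intro: mult_le_mono2 diff_le_mono\<close>)
    also have "\<dots> = (\<Sum>B\<in>#\<B>. card (B \<inter> X)) * (lam - 1)" by (simp add: sum_mset_distrib_right)
    finally have "k * (k - 1) * lam \<le> k * k * (lam - 1)" using s1 s2 by simp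
    then have "k * ((k - 1) * lam) \<le> k * (k * (lam - 1))" by (simp add: mult.assoc)
    then have i1: "(k - 1) * lam \<le> k * (lam - 1)" using k2 by simp
    have "k \<le> v - 1" using assms(2) by simp
    then have "lam * k \<le> lam * (v - 1)" by (rule mult_le_mono2)
    then have i2: "lam * k \<le> k * (k - 1)" using lamv by linarith
    have "int ((k - 1) * lam) \<le> int (k * (lam - 1))" using i1 by (simp only: of_nat_le_iff)
    then have j1: "(int k - 1) * int lam \<le> int k * (int lam - 1)" using k2 l1 by (simp add: of_nat_diff)
    have "int (lam * k) \<le> int (k * (k - 1))" using i2 by (simp only: of_nat_le_iff)
    then have j2: "int lam * int k \<le> int k * (int k - 1)" using k2 by (simp add: of_nat_diff)
    from j1 have "int k \<le> int lam" by (simp add: algebra_simps)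
    moreover have "int lam \<le> int k - 1"
    proof -
      have "int k * (int lam + 1) \<le> int k * int k" using j2 by (simp add: algebra_simps)
      then have "int lam + 1 \<le> int k" using k2 by (simp add: mult_le_cancel_left)
      then show ?thesis by simp
    qed
    ultimately show False by simp
  qed
qed

end
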